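(* Let $G=(V,E)$ be a connected graph, $\tau$ a set of types, $f:\tau\to\mathbb{Q}_{\ge1}$ a fitness function, and $\alpha\in\tau$. Let $\beta=\arg\min\{f(j):j\in\tau\setminus\{\alpha\}\}$ and $\tau'=\{\alpha,\beta\}$. Let $\Omega$ (resp. $\Omega'$) be the set of functions $V\to\tau$ (resp. $V\to\tau'$) and define $g:\Omega\to\Omega'$ by $g(S)(v)=\alpha$ if $S(v)=\alpha$ and $g(S)(v)=\beta$ otherwise. Then for every $M_0\in\Omega$, $\pi_\alpha(G,\tau,f,M_0)\le\pi_\alpha(G,\tau',f,g(M_0))$ (where on the right $f$ is restricted to $\tau'$).
   Context: For $G=(V,E)$, $N(v)$ is the neighbourhood of $v$. For a state $S:V\to\tau$ and $v,w\in V$, $S|_{v\to w}$ equals $S$ except $w$ gets type $S(v)$. The Moran process $M(G,\tau,f,M_0)$ is the Markov chain on states started at $M_0$ in which, given $M_t$, a vertex $v$ is chosen with probability $f(M_t(v))/\sum_{u\in V}f(M_t(u))$, then $w\in N(v)$ uniformly at random, and $M_{t+1}=M_t|_{v\to w}$. $\pi_j(G,\tau,f,M_0)$ is the probability that at some time every vertex has type $j$. *)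

theory Defs
  imports "HOL-Probability.Probability"
begin

definition connected_graph :: "'v set \<Rightarrow> ('v \<times> 'v) set \<Rightarrow> bool" where
  "connected_graph V E \<longleftrightarrow> finite V \<and> V \<noteq> {} \<and> E \<subseteq> V \<times> V \<and> sym E \<and> irrefl E
     \<and> (\<forall>u\<in>V. \<forall>v\<in>V. (u, v) \<in> E\<^sup>*)"

definition nbhd :: "('v \<times> 'v) set \<Rightarrow> 'v \<Rightarrow> 'v set" where
  "nbhd E v = {w. (v, w) \<in> E}"

definition select_vertex :: "'v set \<Rightarrow> ('t \<Rightarrow> rat) \<Rightarrow> ('v \<Rightarrow> 't) \<Rightarrow> 'v pmf" where
  "select_vertex V f S = embed_pmf (\<lambda>v. if v \<in> V
      then real_of_rat (f (S v)) / (\<Sum>u\<in>V. real_of_rat (f (S u))) else 0)"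

text \<open>One step of the Moran process: pick v by fitness, then a uniform neighbour w,
  and w takes the type of v.  (For an isolated vertex, which only occurs in the
  one-vertex graph, the state is left unchanged.)\<close>
definition moran_step :: "'v set \<Rightarrow> ('v \<times> 'v) set \<Rightarrow> ('t \<Rightarrow> rat) \<Rightarrow> ('v \<Rightarrow> 't) \<Rightarrow> ('v \<Rightarrow> 't) pmf" where
  "moran_step V E f S = bind_pmf (select_vertex V f S) (\<lambda>v.
      if nbhd E v = {} then return_pmf S
      else map_pmf (\<lambda>w. S(w := S v)) (pmf_of_set (nbhd E v)))"

fun moran_path :: "'v set \<Rightarrow> ('v \<times> 'v) set \<Rightarrow> ('t \<Rightarrow> rat) \<Rightarrow> ('v \<Rightarrow> 't) \<Rightarrow> nat \<Rightarrow> ('v \<Rightarrow> 't) list pmf" where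
  "moran_path V E f M0 0 = return_pmf [M0]"
| "moran_path V E f M0 (Suc n) = bind_pmf (moran_path V E f M0 n)
      (\<lambda>xs. map_pmf (\<lambda>s. xs @ [s]) (moran_step V E f (last xs)))"

text \<open>pi_j: probability that at some time every vertex has type j, i.e. the limit
  (supremum) over n of the probability that this happens at some time t \<le> n.\<close>
definition fixation_prob :: "'v set \<Rightarrow> ('v \<times> 'v) set \<Rightarrow> ('t \<Rightarrow> rat) \<Rightarrow> ('v \<Rightarrow> 't) \<Rightarrow> 't \<Rightarrow> real" where
  "fixation_prob V E f M0 j = (SUP n. measure_pmf.prob (moran_path V E f M0 n)
      {xs. \<exists>s\<in>set xs. \<forall>v\<in>V. s v = j})"

end

theory Submission
  imports Defs
begin


lemma expect_bind_pmf:
  fixes \<phi> :: "'b \<Rightarrow> real"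
  assumes "\<And>x. \<bar>\<phi> x\<bar> \<le> B"
  shows "measure_pmf.expectation (bind_pmf M N) \<phi> = measure_pmf.expectation M (\<lambda>x. measure_pmf.expectation (N x) \<phi>)"
  unfolding measure_pmf_bind
  by (rule integral_bind[where K="count_space UNIV" and B=B and B'=1])
     (auto simp: assms measure_pmf.emeasure_space_1 prob_space_imp_subprob_space
       measure_pmf_in_subprob_algebra prob_space.finite_measure measure_pmf.prob_space_axioms)

lemma expect_mono_pmf:
  fixes \<phi> \<psi> :: "'b \<Rightarrow> real"
  assumes "\<And>x. \<bar>\<phi> x\<bar> \<le> B" "\<And>x. \<bar>\<psi> x\<bar> \<le> B" "\<And>x. x \<in> set_pmf M \<Longrightarrow> \<phi> x \<le> \<psi> x"
  shows "measure_pmf.expectation M \<phi> \<le> measure_pmf.expectation M \<psi>"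
proof (rule integral_mono_AE)
  show "integrable (measure_pmf M) \<phi>"
    by (rule measure_pmf.integrable_const_bound[where B=B]) (auto simp: assms)
  show "integrable (measure_pmf M) \<psi>"
    by (rule measure_pmf.integrable_const_bound[where B=B]) (auto simp: assms)
  show "AE x in measure_pmf M. \<phi> x \<le> \<psi> x" using assms(3) by (simp add: AE_measure_pmf_iff)
qed

lemma path_nonempty: "xs \<in> set_pmf (moran_path V E f S n) \<Longrightarrow> xs \<noteq> [] \<and> hd xs = S"
  by (induction n arbitrary: xs) auto

lemma path_Suc':
  "moran_path V E f S (Suc n) = bind_pmf (moran_step V E f S) (\<lambda>s. map_pmf ((#) S) (moran_path V E f s n))"
proof (induction n)
  case 0
  then show ?case by (simp add: bind_return_pmf map_pmf_def bind_assoc_pmf)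
next
  case (Suc n)
  have "moran_path V E f S (Suc (Suc n)) = bind_pmf (moran_path V E f S (Suc n))
      (\<lambda>xs. map_pmf (\<lambda>s. xs @ [s]) (moran_step V E f (last xs)))" by simp
  also have "\<dots> = bind_pmf (moran_step V E f S) (\<lambda>s. bind_pmf (moran_path V E f s n)
      (\<lambda>xs. map_pmf (\<lambda>t. (S # xs) @ [t]) (moran_step V E f (last (S # xs)))))"
    apply (simp only: moran_path.simps(2)[of V E f S "Suc n"] Suc)
    by (simp add: bind_assoc_pmf bind_map_pmf del: moran_path.simps)
  also have "\<dots> = bind_pmf (moran_step V E f S) (\<lambda>s. bind_pmf (moran_path V E f s n)
      (\<lambda>xs. map_pmf ((#) S) (map_pmf (\<lambda>t. xs @ [t]) (moran_step V E f (last xs)))))"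
    apply (intro bind_pmf_cong refl)
    using path_nonempty by (fastforce simp: pmf.map_comp o_def)
  also have "\<dots> = bind_pmf (moran_step V E f S) (\<lambda>s. map_pmf ((#) S) (moran_path V E f s (Suc n)))"
    by (simp add: map_bind_pmf)
  finally show ?case .
qed

definition hh :: "'v set \<Rightarrow> ('v \<times> 'v) set \<Rightarrow> ('t \<Rightarrow> rat) \<Rightarrow> 't \<Rightarrow> nat \<Rightarrow> ('v \<Rightarrow> 't) \<Rightarrow> real" where
  "hh V E f j n S = measure_pmf.prob (moran_path V E f S n) {xs. \<exists>s\<in>set xs. \<forall>v\<in>V. s v = j}"

lemma prob_as_expect: "measure_pmf.prob M A = measure_pmf.expectation M (indicator A :: _ \<Rightarrow> real)"
  by simp

lemma hh_bounds: "0 \<le> hh V E f j n S" "hh V E f j n S \<le> 1"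
  by (auto simp: hh_def)

lemma hh_abs: "\<bar>hh V E f j n S\<bar> \<le> 1"
  using hh_bounds[of V E f j n S] by auto

lemma hh_0: "hh V E f j 0 S = (if \<forall>v\<in>V. S v = j then 1 else 0)"
  by (auto simp: hh_def indicator_def)

lemma hh_Suc: "hh V E f j (Suc n) S = (if \<forall>v\<in>V. S v = j then 1
    else measure_pmf.expectation (moran_step V E f S) (\<lambda>s. hh V E f j n s))"
proof -
  let ?A = "{xs. \<exists>s\<in>set xs. \<forall>v\<in>V. s v = j}"
  have "hh V E f j (Suc n) S = measure_pmf.expectation (moran_step V E f S)
      (\<lambda>s. measure_pmf.prob (moran_path V E f s n) ((#) S -` ?A))"
    unfolding hh_def path_Suc' prob_as_expect
    by (subst expect_bind_pmf[where B=1]) (auto simp: indicator_def)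
  also have "\<dots> = (if \<forall>v\<in>V. S v = j then 1
    else measure_pmf.expectation (moran_step V E f S) (\<lambda>s. hh V E f j n s))"
  proof (cases "\<forall>v\<in>V. S v = j")
    case True
    then have "(#) S -` ?A = UNIV" by auto
    then show ?thesis using True by simp
  next
    case False
    then have e: "(#) S -` ?A = ?A" by auto
    show ?thesis unfolding e using False by (simp only: hh_def if_False)
  qed
  finally show ?thesis .
qed

lemma hh_mono_Suc: "hh V E f j n S \<le> hh V E f j (Suc n) S"
proof -
  let ?A = "{xs. \<exists>s\<in>set xs. \<forall>v\<in>V. s v = j}"
  have "hh V E f j (Suc n) S = measure_pmf.expectation (moran_path V E f S n)
      (\<lambda>xs. measure_pmf.prob (moran_step V E f (last xs)) ((\<lambda>s. xs @ [s]) -` ?A))"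
    unfolding hh_def moran_path.simps prob_as_expect
    by (subst expect_bind_pmf[where B=1]) (auto simp: indicator_def)
  also have "\<dots> \<ge> measure_pmf.expectation (moran_path V E f S n) (indicator ?A)"
    by (rule expect_mono_pmf[where B=1]) (auto simp: indicator_def)
  finally show ?thesis by (simp add: hh_def)
qed

lemma hh_incseq: "incseq (\<lambda>n. hh V E f j n S)"
  by (rule incseq_SucI) (rule hh_mono_Suc)

lemma hh_lim: "(\<lambda>n. hh V E f j n S) \<longlonglongrightarrow> fixation_prob V E f S j"
  unfolding fixation_prob_def hh_def[symmetric]
  by (rule LIMSEQ_incseq_SUP[OF _ hh_incseq]) (auto intro: hh_bounds simp: bdd_above_def)

lemma fp_bounds: "0 \<le> fixation_prob V E f S j" "fixation_prob V E f S j \<le> 1"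
  using hh_lim[of V E f j S] hh_bounds[of V E f j]
  by (auto intro: LIMSEQ_le_const LIMSEQ_le_const2)

definition Ev :: "('v \<times> 'v) set \<Rightarrow> ('v \<Rightarrow> 't) \<Rightarrow> (('v \<Rightarrow> 't) \<Rightarrow> real) \<Rightarrow> 'v \<Rightarrow> real" where
  "Ev E S \<phi> v = (if nbhd E v = {} then \<phi> S
     else (\<Sum>w\<in>nbhd E v. \<phi> (S(w := S v))) / card (nbhd E v))"

lemma step_expect:
  fixes \<phi> :: "('v \<Rightarrow> 't) \<Rightarrow> real"
  assumes "finite V" "V \<noteq> {}" "\<And>v. v \<in> V \<Longrightarrow> nbhd E v \<subseteq> V"
    "\<And>u. u \<in> V \<Longrightarrow> f (S u) > 0" "\<And>x. \<bar>\<phi> x\<bar> \<le> B"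
  shows "measure_pmf.expectation (moran_step V E f S) \<phi> =
     (\<Sum>v\<in>V. real_of_rat (f (S v)) * Ev E S \<phi> v) / (\<Sum>u\<in>V. real_of_rat (f (S u)))"
proof -
  define W where "W = (\<Sum>u\<in>V. real_of_rat (f (S u)))"
  have Wpos: "W > 0" unfolding W_def
    using assms(1,2,4) by (intro sum_pos) (auto simp: zero_less_of_rat_iff)
  define p where "p = (\<lambda>v. if v \<in> V then real_of_rat (f (S v)) / W else 0)"
  have pnn: "\<And>v. 0 \<le> p v" unfolding p_def using assms(4) Wpos
    by (auto simp: zero_less_of_rat_iff less_imp_le)
  have "(\<integral>\<^sup>+x. ennreal (p x) \<partial>count_space UNIV) = (\<Sum>x\<in>V. ennreal (p x))"
    by (rule nn_integral_count_space') (auto simp: assms p_def)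
  also have "\<dots> = ennreal (\<Sum>x\<in>V. p x)" using pnn by (simp add: sum_ennreal)
  also have "(\<Sum>x\<in>V. p x) = 1" unfolding p_def using Wpos
    by (simp add: sum_divide_distrib[symmetric] W_def)
  finally have p1: "(\<integral>\<^sup>+x. ennreal (p x) \<partial>count_space UNIV) = 1" by simp
  have sel: "select_vertex V f S = embed_pmf p"
    unfolding select_vertex_def p_def W_def ..
  have pmfsel: "pmf (select_vertex V f S) v = p v" for v
    unfolding sel by (rule pmf_embed_pmf[OF pnn p1])
  have inner: "measure_pmf.expectation (if nbhd E v = {} then return_pmf S
      else map_pmf (\<lambda>w. S(w := S v)) (pmf_of_set (nbhd E v))) \<phi> = Ev E S \<phi> v" if "v \<in> V" for v
  proof -
    have "finite (nbhd E v)" using assms(1) assms(3)[OF that] finite_subset by blast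
    then show ?thesis by (auto simp: Ev_def integral_pmf_of_set)
  qed
  have "measure_pmf.expectation (moran_step V E f S) \<phi> =
      measure_pmf.expectation (select_vertex V f S) (\<lambda>v. measure_pmf.expectation (if nbhd E v = {} then return_pmf S
      else map_pmf (\<lambda>w. S(w := S v)) (pmf_of_set (nbhd E v))) \<phi>)"
    unfolding moran_step_def by (rule expect_bind_pmf[where B=B]) (rule assms(5))
  also have "\<dots> = (\<Sum>v\<in>V. measure_pmf.expectation (if nbhd E v = {} then return_pmf S
      else map_pmf (\<lambda>w. S(w := S v)) (pmf_of_set (nbhd E v))) \<phi> * pmf (select_vertex V f S) v)"
    by (rule integral_measure_pmf_real) (auto simp: assms set_pmf_eq pmfsel p_def split: if_splits)
  also have "\<dots> = (\<Sum>v\<in>V. Ev E S \<phi> v * (real_of_rat (f (S v)) / W))"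
    by (intro sum.cong refl) (simp add: inner pmfsel p_def)
  also have "\<dots> = (\<Sum>v\<in>V. real_of_rat (f (S v)) * Ev E S \<phi> v) / W"
    by (simp add: sum_divide_distrib mult.commute)
  finally show ?thesis by (simp add: W_def)
qed



lemma Ev_tendsto:
  assumes "\<And>T. (\<lambda>n. \<phi> n T) \<longlonglongrightarrow> \<psi> T"
  shows "(\<lambda>n. Ev E S (\<phi> n) v) \<longlonglongrightarrow> Ev E S \<psi> v"
  unfolding Ev_def
  by (cases "nbhd E v = {}") (auto simp: divide_inverse intro!: tendsto_mult_right tendsto_sum assms)

locale setting =
  fixes V :: "'v set" and E :: "('v \<times> 'v) set" and \<tau> :: "'t set"
    and f :: "'t \<Rightarrow> rat" and \<alpha> \<beta> :: 't and c :: "'v \<Rightarrow> 't"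
  assumes cg: "connected_graph V E"
    and f1: "\<forall>j\<in>\<tau>. f j \<ge> 1"
    and a\<tau>: "\<alpha> \<in> \<tau>"
    and b\<tau>: "\<beta> \<in> \<tau> - {\<alpha>}" and bmin: "\<forall>j\<in>\<tau> - {\<alpha>}. f \<beta> \<le> f j"
begin

lemma finV: "finite V" and Vne: "V \<noteq> {}" and nbV: "v \<in> V \<Longrightarrow> nbhd E v \<subseteq> V"
  using cg unfolding connected_graph_def nbhd_def by auto

definition good :: "('v \<Rightarrow> 't) \<Rightarrow> bool" where "good S \<longleftrightarrow> (\<forall>v\<in>V. S v \<in> \<tau>)"
definition yst :: "'v set \<Rightarrow> 'v \<Rightarrow> 't" where
  "yst B = (\<lambda>v. if v \<in> V then (if v \<in> B then \<alpha> else \<beta>) else c v)"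
definition fp :: "('v \<Rightarrow> 't) \<Rightarrow> real" where "fp S = fixation_prob V E f S \<alpha>"
definition Hs :: "'v set \<Rightarrow> real" where "Hs B = fp (yst B)"
definition Aset :: "('v \<Rightarrow> 't) \<Rightarrow> 'v set" where "Aset S = {v\<in>V. S v = \<alpha>}"
definition Psi :: "'v set \<Rightarrow> real" where "Psi A = Min (Hs ` {B. A \<subseteq> B \<and> B \<subseteq> V})"
definition W :: "('v \<Rightarrow> 't) \<Rightarrow> real" where "W S = (\<Sum>u\<in>V. real_of_rat (f (S u)))"
definition ex :: "('v \<Rightarrow> 't) \<Rightarrow> (('v \<Rightarrow> 't) \<Rightarrow> real) \<Rightarrow> real" where
  "ex S \<phi> = measure_pmf.expectation (moran_step V E f S) \<phi>"

lemma good_pos: "good S \<Longrightarrow> u \<in> V \<Longrightarrow> f (S u) > 0"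
  using f1 unfolding good_def by (meson less_le_trans zero_less_one)

lemma good_rf: "good S \<Longrightarrow> u \<in> V \<Longrightarrow> real_of_rat (f (S u)) > 0"
  using good_pos by (simp add: zero_less_of_rat_iff)

lemma yst_good: "good (yst B)"
  using a\<tau> b\<tau> by (auto simp: good_def yst_def)

lemma good_upd: "good S \<Longrightarrow> v \<in> V \<Longrightarrow> good (S(w := S v))"
  by (auto simp: good_def)

lemma W_pos: "good S \<Longrightarrow> W S > 0"
  unfolding W_def using finV Vne good_rf by (intro sum_pos) auto

lemma ex_formula: "good S \<Longrightarrow> (\<And>x. \<bar>\<phi> x\<bar> \<le> B) \<Longrightarrow>
   ex S \<phi> = (\<Sum>v\<in>V. real_of_rat (f (S v)) * Ev E S \<phi> v) / W S"
  unfolding ex_def W_def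
  by (rule step_expect[where B=B]) (auto simp: finV Vne nbV good_pos)

lemma D_identity:
  assumes "good S" "\<And>x. \<bar>\<phi> x\<bar> \<le> B"
  shows "(\<Sum>v\<in>V. real_of_rat (f (S v)) * (Ev E S \<phi> v - \<phi> S)) = W S * (ex S \<phi> - \<phi> S)"
proof -
  have "W S * ex S \<phi> = (\<Sum>v\<in>V. real_of_rat (f (S v)) * Ev E S \<phi> v)"
    using ex_formula[OF assms] W_pos[OF assms(1)] by simp
  have "(\<Sum>v\<in>V. real_of_rat (f (S v)) * (Ev E S \<phi> v - \<phi> S)) =
     (\<Sum>v\<in>V. real_of_rat (f (S v)) * Ev E S \<phi> v) - W S * \<phi> S"
    unfolding W_def by (simp add: right_diff_distrib sum_subtractf sum_distrib_right)
  also have "\<dots> = W S * (ex S \<phi> - \<phi> S)"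
    using \<open>W S * ex S \<phi> = _\<close> by (simp add: right_diff_distrib)
  finally show ?thesis .
qed

lemma fp_abs: "\<bar>fp S\<bar> \<le> 1"
  using fp_bounds[of V E f S \<alpha>] unfolding fp_def by auto

lemma fp_lim: "(\<lambda>n. hh V E f \<alpha> n S) \<longlonglongrightarrow> fp S"
  unfolding fp_def by (rule hh_lim)

lemma Hs_V: "Hs V = 1"
proof -
  have "hh V E f \<alpha> 0 (yst V) = 1" by (simp add: hh_0 yst_def)
  then have "\<forall>n. 1 \<le> hh V E f \<alpha> n (yst V)"
    using hh_incseq[of V E f \<alpha> "yst V"] by (metis incseqD zero_le)
  then have "1 \<le> Hs V" unfolding Hs_def
    by (intro LIMSEQ_le_const[OF fp_lim]) auto
  then show ?thesis using fp_abs[of "yst V"] by (simp add: Hs_def)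
qed

lemma yst_upd: "v \<in> V \<Longrightarrow> w \<in> V \<Longrightarrow>
  (yst B)(w := yst B v) = yst (if v \<in> B then insert w B else B - {w})"
  by (auto simp: yst_def fun_eq_iff)

lemma yst_upd_a: "w \<in> V \<Longrightarrow> (yst B)(w := \<alpha>) = yst (insert w B)"
  by (auto simp: yst_def fun_eq_iff)

lemma yst_upd_b: "w \<in> V \<Longrightarrow> (yst B)(w := \<beta>) = yst (B - {w})"
  by (auto simp: yst_def fun_eq_iff)

lemma fixed_yst: "B \<subseteq> V \<Longrightarrow> (\<forall>v\<in>V. yst B v = \<alpha>) \<longleftrightarrow> B = V"
  using b\<tau> by (auto simp: yst_def)

lemma Y_harm:
  assumes "B \<subseteq> V" "B \<noteq> V"
  shows "ex (yst B) fp = Hs B"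
proof -
  have nf: "\<not> (\<forall>v\<in>V. yst B v = \<alpha>)" using fixed_yst assms by blast
  have eq: "hh V E f \<alpha> (Suc n) (yst B) =
     (\<Sum>v\<in>V. real_of_rat (f (yst B v)) * Ev E (yst B) (hh V E f \<alpha> n) v) / W (yst B)" for n
    using hh_Suc[of V E f \<alpha> n "yst B"] nf ex_formula[OF yst_good hh_abs] W_pos[OF yst_good, of B]
    by (simp add: ex_def)
  have "(\<lambda>n. hh V E f \<alpha> (Suc n) (yst B)) \<longlonglongrightarrow> Hs B"
    unfolding Hs_def using fp_lim LIMSEQ_Suc by blast
  moreover have "(\<lambda>n. hh V E f \<alpha> (Suc n) (yst B)) \<longlonglongrightarrow>
     (\<Sum>v\<in>V. real_of_rat (f (yst B v)) * Ev E (yst B) fp v) / W (yst B)"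
    unfolding eq divide_inverse by (intro tendsto_mult_right tendsto_sum tendsto_mult_left Ev_tendsto fp_lim)
  ultimately have "Hs B = (\<Sum>v\<in>V. real_of_rat (f (yst B v)) * Ev E (yst B) fp v) / W (yst B)"
    using LIMSEQ_unique by blast
  then show ?thesis using ex_formula[OF yst_good fp_abs] W_pos[OF yst_good] by simp
qed

lemma Y_super:
  assumes "B \<subseteq> V" "B \<noteq> V"
  shows "(\<Sum>v\<in>V. real_of_rat (f (yst B v)) * (Ev E (yst B) fp v - Hs B)) \<le> 0"
  using D_identity[where \<phi>=fp and S="yst B" and B=1, OF yst_good fp_abs] Y_harm[OF assms] by (simp add: Hs_def)

lemma Bfin: "finite {B. A \<subseteq> B \<and> B \<subseteq> V}"
  using finV by (rule rev_finite_subset[OF finite_Pow_iff[THEN iffD2]]) auto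

lemma Psi_le: "A \<subseteq> B \<Longrightarrow> B \<subseteq> V \<Longrightarrow> Psi A \<le> Hs B"
  unfolding Psi_def using Bfin by (intro Min_le) auto

lemma Psi_ex: "A \<subseteq> V \<Longrightarrow> \<exists>B. A \<subseteq> B \<and> B \<subseteq> V \<and> Psi A = Hs B"
proof -
  assume "A \<subseteq> V"
  then have "Psi A \<in> Hs ` {B. A \<subseteq> B \<and> B \<subseteq> V}"
    unfolding Psi_def using Bfin by (intro Min_in) auto
  then show ?thesis by auto
qed

lemma Psi_mono: "A \<subseteq> A' \<Longrightarrow> A' \<subseteq> V \<Longrightarrow> Psi A \<le> Psi A'"
proof -
  assume a: "A \<subseteq> A'" "A' \<subseteq> V"
  obtain B where "A' \<subseteq> B" "B \<subseteq> V" "Psi A' = Hs B" using Psi_ex[OF a(2)] by blast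
  then show ?thesis using Psi_le[of A B] a by auto
qed

lemma Psi_V: "Psi V = 1"
  using Psi_ex[of V] Hs_V by auto

lemma Psi_bounds: "A \<subseteq> V \<Longrightarrow> 0 \<le> Psi A \<and> Psi A \<le> 1"
proof -
  assume a: "A \<subseteq> V"
  obtain B where "A \<subseteq> B" "B \<subseteq> V" "Psi A = Hs B" using Psi_ex[OF a] by blast
  moreover have "0 \<le> Hs B" unfolding Hs_def fp_def by (rule fp_bounds)
  ultimately show ?thesis using Psi_le[OF a order_refl] Hs_V by auto
qed

lemma Aset_sub: "Aset S \<subseteq> V" by (auto simp: Aset_def)

lemma PA_abs: "\<bar>Psi (Aset S)\<bar> \<le> 1"
  using Psi_bounds[OF Aset_sub] by auto

lemma Aset_upd: "v \<in> V \<Longrightarrow> w \<in> V \<Longrightarrow>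
   Aset (S(w := S v)) = (if S v = \<alpha> then insert w (Aset S) else Aset S - {w})"
  by (auto simp: Aset_def)

lemma Ev_mono:
  assumes "\<And>w. w \<in> nbhd E v \<Longrightarrow> \<phi> (S(w := S v)) \<le> \<psi> (S(w := S v))" "\<phi> S \<le> \<psi> S"
  shows "Ev E S \<phi> v \<le> Ev E S \<psi> v"
  unfolding Ev_def using assms by (auto intro!: divide_right_mono sum_mono)

lemma Ev_diff:
  assumes "v \<in> V" "nbhd E v \<noteq> {}"
  shows "r * (Ev E S \<phi> v - a) = (\<Sum>w\<in>nbhd E v. r * (\<phi> (S(w := S v)) - a)) / card (nbhd E v)"
proof -
  have fin: "finite (nbhd E v)" using finV nbV[OF assms(1)] finite_subset by blast
  then have k: "card (nbhd E v) > 0" using assms(2) by (simp add: card_gt_0_iff)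
  have "(\<Sum>w\<in>nbhd E v. r * (\<phi> (S(w := S v)) - a)) =
     r * (\<Sum>w\<in>nbhd E v. \<phi> (S(w := S v))) - r * a * card (nbhd E v)"
    by (simp add: sum_distrib_left right_diff_distrib sum_subtractf)
  then show ?thesis using k assms(2) unfolding Ev_def
    by (simp add: field_simps)
qed

lemma key_w:
  assumes g: "good S" and AB: "Aset S \<subseteq> B" "B \<subseteq> V" and eq: "Psi (Aset S) = Hs B"
    and vw: "v \<in> V" "w \<in> V"
  shows "real_of_rat (f (S v)) * (Psi (Aset (S(w := S v))) - Psi (Aset S))
     \<le> real_of_rat (f (yst B v)) * (fp ((yst B)(w := yst B v)) - Hs B)"
proof -
  have r0: "real_of_rat (f (S v)) \<ge> 0" using good_rf[OF g vw(1)] by simp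
  have rb: "real_of_rat (f \<beta>) \<ge> 0" using good_rf[OF yst_good vw(1), of "{}"] vw by (simp add: yst_def)
  consider "S v = \<alpha>" | "S v \<noteq> \<alpha>" "v \<in> B" | "v \<notin> B" using AB vw by (auto simp: Aset_def)
  then show ?thesis
  proof cases
    case 1
    then have yv: "yst B v = \<alpha>" using AB vw by (auto simp: yst_def Aset_def)
    have "Psi (insert w (Aset S)) \<le> Hs (insert w B)" using AB vw by (intro Psi_le) auto
    moreover have "Aset (S(w := S v)) = insert w (Aset S)" using Aset_upd[OF vw, of S] 1 by simp
    moreover have "(yst B)(w := yst B v) = yst (insert w B)" using yst_upd[OF vw, of B] 1 AB vw
      by (auto simp: Aset_def)
    ultimately have "real_of_rat (f (S v)) * (Psi (Aset (S(w := S v))) - Psi (Aset S))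
       \<le> real_of_rat (f (S v)) * (Hs (insert w B) - Hs B)"
      using r0 eq by (intro mult_left_mono) simp_all
    moreover have "(yst B)(w := \<alpha>) = yst (insert w B)" using vw by (auto simp: yst_def fun_eq_iff)
    ultimately show ?thesis using yv 1 by (simp add: Hs_def)
  next
    case 2
    then have yv: "yst B v = \<alpha>" using vw by (auto simp: yst_def)
    have l: "Psi (Aset S - {w}) \<le> Psi (Aset S)" using Aset_sub by (intro Psi_mono) auto
    have r: "Hs B \<le> Hs (insert w B)" using AB vw eq Psi_le[of "Aset S" "insert w B"] by auto
    have ra: "real_of_rat (f \<alpha>) \<ge> 0" using good_rf[OF yst_good vw(1), of B] by (simp add: yv)
    have "real_of_rat (f (S v)) * (Psi (Aset S - {w}) - Psi (Aset S)) \<le> 0"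
      using r0 l by (simp add: mult_nonneg_nonpos)
    also have "0 \<le> real_of_rat (f \<alpha>) * (Hs (insert w B) - Hs B)" using ra r by simp
    finally show ?thesis using 2 yv vw
      by (simp add: Aset_upd yst_upd_a Hs_def[symmetric])
  next
    case 3
    then have sv: "S v \<noteq> \<alpha>" using AB vw by (auto simp: Aset_def)
    have yv: "yst B v = \<beta>" using vw 3 by (auto simp: yst_def)
    have "S v \<in> \<tau> - {\<alpha>}" using g vw sv by (auto simp: good_def)
    then have fb: "real_of_rat (f \<beta>) \<le> real_of_rat (f (S v))" using bmin by (simp add: of_rat_less_eq)
    define x where "x = Psi (Aset S - {w}) - Psi (Aset S)"
    define y where "y = Hs (B - {w}) - Hs B"
    have x0: "x \<le> 0" unfolding x_def using Aset_sub by (simp add: Psi_mono Diff_subset)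
    have xy: "x \<le> y" unfolding x_def y_def using eq Psi_le[of "Aset S - {w}" "B - {w}"] AB by auto
    have "real_of_rat (f (S v)) * x \<le> real_of_rat (f \<beta>) * x"
      using fb x0 by (rule mult_right_mono_neg)
    also have "\<dots> \<le> real_of_rat (f \<beta>) * y" using rb xy by (simp add: mult_left_mono)
    finally show ?thesis using sv 3 yv vw
      by (simp add: Aset_upd yst_upd_b Hs_def[symmetric] x_def y_def)
  qed
qed

lemma key_v:
  assumes g: "good S" and AB: "Aset S \<subseteq> B" "B \<subseteq> V" and eq: "Psi (Aset S) = Hs B"
    and v: "v \<in> V"
  shows "real_of_rat (f (S v)) * (Ev E S (\<lambda>T. Psi (Aset T)) v - Psi (Aset S))
     \<le> real_of_rat (f (yst B v)) * (Ev E (yst B) fp v - Hs B)"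
proof (cases "nbhd E v = {}")
  case True
  then show ?thesis using eq by (simp add: Ev_def Hs_def)
next
  case False
  show ?thesis
    unfolding Ev_diff[OF v False]
    using key_w[OF g AB eq v] nbV[OF v]
    by (intro divide_right_mono sum_mono) auto
qed

lemma X_super:
  assumes g: "good S" and nf: "Aset S \<noteq> V"
  shows "ex S (\<lambda>T. Psi (Aset T)) \<le> Psi (Aset S)"
proof -
  obtain B where AB: "Aset S \<subseteq> B" "B \<subseteq> V" and eq: "Psi (Aset S) = Hs B"
    using Psi_ex[OF Aset_sub] by blast
  show ?thesis
  proof (cases "B = V")
    case True
    have "ex S (\<lambda>T. Psi (Aset T)) \<le> ex S (\<lambda>T. 1)"
      unfolding ex_def by (rule expect_mono_pmf[where B=1]) (auto simp: PA_abs Psi_bounds[OF Aset_sub])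
    also have "\<dots> = 1" by (simp add: ex_def)
    finally show ?thesis using True eq Hs_V by simp
  next
    case False
    have "W S * (ex S (\<lambda>T. Psi (Aset T)) - Psi (Aset S)) =
      (\<Sum>v\<in>V. real_of_rat (f (S v)) * (Ev E S (\<lambda>T. Psi (Aset T)) v - Psi (Aset S)))"
      using D_identity[where \<phi>="\<lambda>T. Psi (Aset T)" and B=1, OF g PA_abs] by simp
    also have "\<dots> \<le> (\<Sum>v\<in>V. real_of_rat (f (yst B v)) * (Ev E (yst B) fp v - Hs B))"
      using key_v[OF g AB eq] by (intro sum_mono) auto
    also have "\<dots> \<le> 0" using Y_super[OF AB(2) False] .
    finally show ?thesis using W_pos[OF g]
      by (simp add: mult_le_0_iff)
  qed
qed

lemma fixed_Aset: "(\<forall>v\<in>V. S v = \<alpha>) \<longleftrightarrow> Aset S = V"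
  by (auto simp: Aset_def)

lemma main_ind: "good S \<Longrightarrow> hh V E f \<alpha> n S \<le> Psi (Aset S)"
proof (induction n arbitrary: S)
  case 0
  then show ?case using Psi_V Psi_bounds[OF Aset_sub] fixed_Aset by (auto simp: hh_0)
next
  case (Suc n)
  show ?case
  proof (cases "Aset S = V")
    case True
    then show ?thesis using Psi_V fixed_Aset by (simp add: hh_Suc)
  next
    case False
    then have "hh V E f \<alpha> (Suc n) S = ex S (hh V E f \<alpha> n)"
      using fixed_Aset by (simp add: hh_Suc ex_def)
    also have "\<dots> \<le> ex S (\<lambda>T. Psi (Aset T))"
      unfolding ex_formula[OF Suc.prems hh_abs] ex_formula[OF Suc.prems PA_abs]
      using W_pos[OF Suc.prems] good_rf[OF Suc.prems]
      by (intro divide_right_mono sum_mono mult_left_mono Ev_mono Suc.IH Suc.prems)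
         (use Suc.prems in \<open>auto simp: good_def intro: less_imp_le\<close>)
    also have "\<dots> \<le> Psi (Aset S)" by (rule X_super[OF Suc.prems False])
    finally show ?thesis .
  qed
qed

lemma final:
  assumes "good M0" "\<And>v. c v = (if M0 v = \<alpha> then \<alpha> else \<beta>)"
  shows "fixation_prob V E f M0 \<alpha> \<le> fixation_prob V E f c \<alpha>"
proof -
  have "fixation_prob V E f M0 \<alpha> \<le> Psi (Aset M0)"
    unfolding fixation_prob_def hh_def[symmetric]
    by (rule cSUP_least) (auto intro: main_ind assms(1))
  also have "\<dots> \<le> Hs (Aset M0)" by (rule Psi_le[OF order_refl Aset_sub])
  also have "yst (Aset M0) = c" using assms(2) by (auto simp: yst_def Aset_def fun_eq_iff)
  then have "Hs (Aset M0) = fixation_prob V E f c \<alpha>" by (simp add: Hs_def fp_def)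
  finally show ?thesis .
qed

end


theorem corollary21:
  fixes V :: "'v set" and E :: "('v \<times> 'v) set" and \<tau> :: "'t set"
    and f :: "'t \<Rightarrow> rat" and \<alpha> \<beta> :: 't and M0 :: "'v \<Rightarrow> 't"
  assumes "connected_graph V E"
    and "\<forall>j\<in>\<tau>. f j \<ge> 1"
    and "\<alpha> \<in> \<tau>"
    and "\<beta> \<in> \<tau> - {\<alpha>}" and "\<forall>j\<in>\<tau> - {\<alpha>}. f \<beta> \<le> f j"
    and "\<forall>v\<in>V. M0 v \<in> \<tau>"
  shows "fixation_prob V E f M0 \<alpha>
    \<le> fixation_prob V E f (\<lambda>v. if M0 v = \<alpha> then \<alpha> else \<beta>) \<alpha>"
proof -
  interpret setting V E \<tau> f \<alpha> \<beta> "\<lambda>v. if M0 v = \<alpha> then \<alpha> else \<beta>"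
    using assms(1-5) by unfold_locales
  show ?thesis by (rule final) (auto simp: good_def assms(6))
qed

end
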